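(* Let $P\in\mathbb{N}_0^{n\times n}$ be an incidence matrix that exclusively represents irreducible morphisms (resp. exclusively represents reducible morphisms), and let $1\leq i,j\leq n$. Then the matrix obtained from $P$ by swapping its $i$-th and $j$-th rows, and the matrix obtained from $P$ by swapping its $i$-th and $j$-th columns, also exclusively represent irreducible morphisms (resp. reducible morphisms).
   Context: Let $\Sigma=\{a_1,\dots,a_n\}$. A morphism $\varphi:\Sigma^+\to\Sigma^+$ (non-empty images) is Parikh-positive if every letter occurs in $\varphi(a_1)\cdots\varphi(a_n)$. Its incidence matrix is $P(\varphi)=(m_{i,j})$ with $m_{i,j}=|\varphi(a_j)|_{a_i}$. An incidence matrix is any square non-negative integer matrix; throughout, the incidence matrices considered have no zero rows or columns. An automorphism is an injective morphism mapping each letter to a single letter; a morphism is reducible if it equals $\psi_2\circ\psi_1$ with neither $\psi_1,\psi_2$ an automorphism, irreducible otherwise. An incidence matrix $P$ exclusively represents irreducible (resp. reducible) morphisms if every Parikh-positive morphism $\varphi$ with $P(\varphi)=P$ is irreducible (resp. reducible). *)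

theory Defs
  imports "Jordan_Normal_Form.Column_Operations"
begin

text \<open>Alphabet \<Sigma> = {a_1,...,a_n} is encoded as the letters 0,...,n-1 (type nat);
  words are lists of letters; a morphism is given by the images of the letters
  (only the values on letters a < n matter).\<close>

definition is_morphism :: "nat \<Rightarrow> (nat \<Rightarrow> nat list) \<Rightarrow> bool" where
  "is_morphism n \<phi> \<longleftrightarrow> (\<forall>a<n. \<phi> a \<noteq> [] \<and> set (\<phi> a) \<subseteq> {..<n})"

definition parikh_positive :: "nat \<Rightarrow> (nat \<Rightarrow> nat list) \<Rightarrow> bool" where
  "parikh_positive n \<phi> \<longleftrightarrow> (\<forall>b<n. b \<in> set (concat (map \<phi> [0..<n])))"

definition incidence_matrix :: "nat \<Rightarrow> (nat \<Rightarrow> nat list) \<Rightarrow> nat mat" where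
  "incidence_matrix n \<phi> = mat n n (\<lambda>(i, j). count_list (\<phi> j) i)"

definition morph_comp :: "(nat \<Rightarrow> nat list) \<Rightarrow> (nat \<Rightarrow> nat list) \<Rightarrow> (nat \<Rightarrow> nat list)" where
  "morph_comp \<psi>2 \<psi>1 = (\<lambda>a. concat (map \<psi>2 (\<psi>1 a)))"

definition is_automorphism :: "nat \<Rightarrow> (nat \<Rightarrow> nat list) \<Rightarrow> bool" where
  "is_automorphism n \<phi> \<longleftrightarrow> is_morphism n \<phi> \<and> (\<forall>a<n. length (\<phi> a) = 1)
     \<and> inj_on (\<lambda>a. hd (\<phi> a)) {..<n}"

definition reducible :: "nat \<Rightarrow> (nat \<Rightarrow> nat list) \<Rightarrow> bool" where
  "reducible n \<phi> \<longleftrightarrow> (\<exists>\<psi>1 \<psi>2. is_morphism n \<psi>1 \<and> is_morphism n \<psi>2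
     \<and> \<not> is_automorphism n \<psi>1 \<and> \<not> is_automorphism n \<psi>2
     \<and> (\<forall>a<n. \<phi> a = morph_comp \<psi>2 \<psi>1 a))"

definition irreducible_morph :: "nat \<Rightarrow> (nat \<Rightarrow> nat list) \<Rightarrow> bool" where
  "irreducible_morph n \<phi> \<longleftrightarrow> \<not> reducible n \<phi>"

definition excl_irreducible :: "nat \<Rightarrow> nat mat \<Rightarrow> bool" where
  "excl_irreducible n P \<longleftrightarrow> (\<forall>\<phi>. is_morphism n \<phi> \<and> parikh_positive n \<phi>
      \<and> incidence_matrix n \<phi> = P \<longrightarrow> irreducible_morph n \<phi>)"

definition excl_reducible :: "nat \<Rightarrow> nat mat \<Rightarrow> bool" where
  "excl_reducible n P \<longleftrightarrow> (\<forall>\<phi>. is_morphism n \<phi> \<and> parikh_positive n \<phi>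
      \<and> incidence_matrix n \<phi> = P \<longrightarrow> reducible n \<phi>)"

end

theory Submission
  imports Defs
begin

definition sw :: "nat \<Rightarrow> nat \<Rightarrow> nat \<Rightarrow> nat" where
  "sw i j x = (if x = i then j else if x = j then i else x)"

lemma sw_sw[simp]: "sw i j (sw i j x) = x"
  by (auto simp: sw_def)

lemma sw_lt[simp]: "i < n \<Longrightarrow> j < n \<Longrightarrow> sw i j x < n \<longleftrightarrow> x < n"
  by (auto simp: sw_def)

lemma sw_inj: "sw i j x = sw i j y \<longleftrightarrow> x = y"
  by (metis sw_sw)

lemma count_map_sw: "count_list (map (sw i j) w) r = count_list w (sw i j r)"
  by (induction w) (auto simp: sw_def)

lemma R1:
  assumes "reducible n \<phi>" "i < n" "j < n" "\<forall>a<n. \<chi> a = map (sw i j) (\<phi> a)"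
  shows "reducible n \<chi>"
proof -
  obtain \<psi>1 \<psi>2 where h: "is_morphism n \<psi>1" "is_morphism n \<psi>2"
     "\<not> is_automorphism n \<psi>1" "\<not> is_automorphism n \<psi>2"
     "\<forall>a<n. \<phi> a = morph_comp \<psi>2 \<psi>1 a"
    using assms(1) unfolding reducible_def by blast
  define \<psi>2' where "\<psi>2' = (\<lambda>b. map (sw i j) (\<psi>2 b))"
  have m: "is_morphism n \<psi>2'" using h(2) assms(2,3)
    by (auto simp: is_morphism_def \<psi>2'_def subset_iff)
  have na: "\<not> is_automorphism n \<psi>2'"
  proof
    assume a: "is_automorphism n \<psi>2'"
    have l: "\<forall>a<n. length (\<psi>2 a) = 1" using a by (simp add: is_automorphism_def \<psi>2'_def)
    have "inj_on (\<lambda>a. hd (\<psi>2 a)) {..<n}"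
    proof (rule inj_onI)
      fix x y assume xy: "x \<in> {..<n}" "y \<in> {..<n}" "hd (\<psi>2 x) = hd (\<psi>2 y)"
      have "hd (\<psi>2' x) = hd (\<psi>2' y)" using xy l unfolding \<psi>2'_def
        by (metis hd_map length_0_conv lessThan_iff zero_neq_one)
      then show "x = y" using a xy(1,2) unfolding is_automorphism_def inj_on_def by blast
    qed
    then show False using h(2,4) l unfolding is_automorphism_def by blast
  qed
  have "\<forall>a<n. \<chi> a = morph_comp \<psi>2' \<psi>1 a"
    using assms(4) h(5) by (simp add: morph_comp_def \<psi>2'_def map_concat comp_def)
  then show ?thesis unfolding reducible_def using h(1,3) m na by blast
qed

lemma R2:
  assumes "reducible n \<phi>" "i < n" "j < n" "\<forall>a<n. \<chi> a = \<phi> (sw i j a)"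
  shows "reducible n \<chi>"
proof -
  obtain \<psi>1 \<psi>2 where h: "is_morphism n \<psi>1" "is_morphism n \<psi>2"
     "\<not> is_automorphism n \<psi>1" "\<not> is_automorphism n \<psi>2"
     "\<forall>a<n. \<phi> a = morph_comp \<psi>2 \<psi>1 a"
    using assms(1) unfolding reducible_def by blast
  define \<psi>1' where "\<psi>1' = (\<lambda>b. \<psi>1 (sw i j b))"
  have m: "is_morphism n \<psi>1'" using h(1) assms(2,3)
    by (auto simp: is_morphism_def \<psi>1'_def)
  have na: "\<not> is_automorphism n \<psi>1'"
  proof
    assume a: "is_automorphism n \<psi>1'"
    have l: "\<forall>a<n. length (\<psi>1 a) = 1" using a assms(2,3) unfolding is_automorphism_def \<psi>1'_def
      by (metis sw_lt sw_sw)
    have "inj_on (\<lambda>a. hd (\<psi>1 a)) {..<n}"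
    proof (rule inj_onI)
      fix x y assume xy: "x \<in> {..<n}" "y \<in> {..<n}" "hd (\<psi>1 x) = hd (\<psi>1 y)"
      have "hd (\<psi>1' (sw i j x)) = hd (\<psi>1' (sw i j y))" using xy unfolding \<psi>1'_def by simp
      moreover have "sw i j x \<in> {..<n}" "sw i j y \<in> {..<n}" using xy assms(2,3) by auto
      ultimately have "sw i j x = sw i j y" using a unfolding is_automorphism_def inj_on_def by blast
      then show "x = y" by (simp add: sw_inj)
    qed
    then show False using h(1,3) l unfolding is_automorphism_def by blast
  qed
  have "\<forall>a<n. \<chi> a = morph_comp \<psi>2 \<psi>1' a"
    using assms h(5) by (simp add: morph_comp_def \<psi>1'_def)
  then show ?thesis unfolding reducible_def using h(2,4) m na by blast
qed

lemma rows_trans: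
  assumes P: "P \<in> carrier_mat n n" and ij: "i < n" "j < n"
    and \<phi>: "is_morphism n \<phi>" "parikh_positive n \<phi>" "incidence_matrix n \<phi> = swaprows i j P"
  defines "\<phi>' \<equiv> (\<lambda>a. map (sw i j) (\<phi> a))"
  shows "is_morphism n \<phi>'" "parikh_positive n \<phi>'" "incidence_matrix n \<phi>' = P"
proof -
  show "is_morphism n \<phi>'" using \<phi>(1) ij by (auto simp: is_morphism_def \<phi>'_def subset_iff)
  show "parikh_positive n \<phi>'"
    unfolding parikh_positive_def
  proof (intro allI impI)
    fix b assume b: "b < n"
    then have "sw i j b \<in> set (concat (map \<phi> [0..<n]))" using \<phi>(2) ij
      by (simp add: parikh_positive_def)
    then obtain a where a: "a < n" "sw i j b \<in> set (\<phi> a)" by auto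
    then have "b \<in> set (\<phi>' a)" unfolding \<phi>'_def by (metis image_eqI list.set_map sw_sw)
    then show "b \<in> set (concat (map \<phi>' [0..<n]))" using a by auto
  qed
  show "incidence_matrix n \<phi>' = P"
  proof (rule eq_matI)
    fix r c assume rc: "r < dim_row P" "c < dim_col P"
    have "count_list (\<phi> c) (sw i j r) = swaprows i j P $$ (sw i j r, c)"
      using rc P ij \<phi>(3)[symmetric] by (simp add: incidence_matrix_def)
    also have "\<dots> = P $$ (r, c)" using rc P ij by (auto simp: sw_def)
    finally show "incidence_matrix n \<phi>' $$ (r, c) = P $$ (r, c)"
      using rc P by (simp add: incidence_matrix_def \<phi>'_def count_map_sw)
  qed (use P in \<open>auto simp: incidence_matrix_def\<close>)
qed

lemma cols_trans:
  assumes P: "P \<in> carrier_mat n n" and ij: "i < n" "j < n"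
    and \<phi>: "is_morphism n \<phi>" "parikh_positive n \<phi>" "incidence_matrix n \<phi> = swapcols i j P"
  defines "\<phi>' \<equiv> (\<lambda>a. \<phi> (sw i j a))"
  shows "is_morphism n \<phi>'" "parikh_positive n \<phi>'" "incidence_matrix n \<phi>' = P"
proof -
  show "is_morphism n \<phi>'" using \<phi>(1) ij by (auto simp: is_morphism_def \<phi>'_def)
  show "parikh_positive n \<phi>'"
    unfolding parikh_positive_def
  proof (intro allI impI)
    fix b assume b: "b < n"
    then have "b \<in> set (concat (map \<phi> [0..<n]))" using \<phi>(2)
      by (simp add: parikh_positive_def)
    then obtain a where a: "a < n" "b \<in> set (\<phi> a)" by auto
    then have "b \<in> set (\<phi>' (sw i j a))" unfolding \<phi>'_def by simp
    then show "b \<in> set (concat (map \<phi>' [0..<n]))" using a ij by auto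
  qed
  show "incidence_matrix n \<phi>' = P"
  proof (rule eq_matI)
    fix r c assume rc: "r < dim_row P" "c < dim_col P"
    have "count_list (\<phi> (sw i j c)) r = swapcols i j P $$ (r, sw i j c)"
      using rc P ij \<phi>(3)[symmetric] by (simp add: incidence_matrix_def)
    also have "\<dots> = P $$ (r, c)" using rc P ij by (auto simp: sw_def)
    finally show "incidence_matrix n \<phi>' $$ (r, c) = P $$ (r, c)"
      using rc P by (simp add: incidence_matrix_def \<phi>'_def)
  qed (use P in \<open>auto simp: incidence_matrix_def\<close>)
qed

theorem proposition18:
  fixes P :: "nat mat" and n i j :: nat
  assumes "P \<in> carrier_mat n n"
    and "\<forall>r<n. \<exists>c<n. P $$ (r, c) \<noteq> 0"
    and "\<forall>c<n. \<exists>r<n. P $$ (r, c) \<noteq> 0"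
    and "i < n" and "j < n"
  shows "(excl_irreducible n P \<longrightarrow>
            excl_irreducible n (swaprows i j P) \<and> excl_irreducible n (swapcols i j P))
       \<and> (excl_reducible n P \<longrightarrow>
            excl_reducible n (swaprows i j P) \<and> excl_reducible n (swapcols i j P))"
proof (intro conjI impI)
  assume E: "excl_irreducible n P"
  show "excl_irreducible n (swaprows i j P)" unfolding excl_irreducible_def irreducible_morph_def
  proof (intro allI impI notI)
    fix \<phi> assume h: "is_morphism n \<phi> \<and> parikh_positive n \<phi> \<and> incidence_matrix n \<phi> = swaprows i j P"
      and r: "reducible n \<phi>"
    note t = rows_trans[OF assms(1,4,5), of \<phi>]
    have "reducible n (\<lambda>a. map (sw i j) (\<phi> a))" using R1[OF r assms(4,5)] by simp
    then show False using E t h unfolding excl_irreducible_def irreducible_morph_def by blast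
  qed
  show "excl_irreducible n (swapcols i j P)" unfolding excl_irreducible_def irreducible_morph_def
  proof (intro allI impI notI)
    fix \<phi> assume h: "is_morphism n \<phi> \<and> parikh_positive n \<phi> \<and> incidence_matrix n \<phi> = swapcols i j P"
      and r: "reducible n \<phi>"
    note t = cols_trans[OF assms(1,4,5), of \<phi>]
    have "reducible n (\<lambda>a. \<phi> (sw i j a))" using R2[OF r assms(4,5)] by simp
    then show False using E t h unfolding excl_irreducible_def irreducible_morph_def by blast
  qed
next
  assume E: "excl_reducible n P"
  show "excl_reducible n (swaprows i j P)" unfolding excl_reducible_def
  proof (intro allI impI)
    fix \<phi> assume h: "is_morphism n \<phi> \<and> parikh_positive n \<phi> \<and> incidence_matrix n \<phi> = swaprows i j P"
    note t = rows_trans[OF assms(1,4,5), of \<phi>]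
    have "reducible n (\<lambda>a. map (sw i j) (\<phi> a))" using E t h unfolding excl_reducible_def by blast
    from R1[OF this assms(4,5), of \<phi>] show "reducible n \<phi>" by (simp add: comp_def)
  qed
  show "excl_reducible n (swapcols i j P)" unfolding excl_reducible_def
  proof (intro allI impI)
    fix \<phi> assume h: "is_morphism n \<phi> \<and> parikh_positive n \<phi> \<and> incidence_matrix n \<phi> = swapcols i j P"
    note t = cols_trans[OF assms(1,4,5), of \<phi>]
    have "reducible n (\<lambda>a. \<phi> (sw i j a))" using E t h unfolding excl_reducible_def by blast
    from R2[OF this assms(4,5), of \<phi>] show "reducible n \<phi>" by simp
  qed
qed

end
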